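(* Let $(\mathcal B^0,\|\cdot\|_0)$ and $(\mathcal B^1,\|\cdot\|_1)$ be Banach spaces over $\mathbb K\in\{\mathbb R,\mathbb C\}$ with $\mathcal B^1\subset\mathcal B^0$ as a linear subspace, and let $\mathcal L:\mathcal B^1\to\mathcal B^0$ be a linear operator. The following are equivalent: (a) $\mathcal L$ is weak bounded; (b) whenever $f_\epsilon,f\in\mathcal B^1$ satisfy $\|f_\epsilon-f\|_0\to0$ as $\epsilon\to0$ and $\sup_{\epsilon>0}\|f_\epsilon\|_1<+\infty$, then $\|\mathcal Lf_\epsilon-\mathcal Lf\|_0\to0$ as $\epsilon\to0$; (c) $\sup\{\|\mathcal Lf\|_0:\ f\in\mathcal B^1,\ \|f\|_1\le1,\ \|f\|_0\le\delta\}\to0$ as $\delta\to0$.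
   Context: A linear operator $\mathcal L:\mathcal B^1\to\mathcal B^0$ is called weak bounded if for every $\epsilon>0$ there is a constant $c(\epsilon)>0$ such that $\|\mathcal Lf\|_0\le c(\epsilon)\|f\|_0+\epsilon\|f\|_1$ for all $f\in\mathcal B^1$. *)

theory Defs
  imports "HOL-Analysis.Analysis"
begin

text \<open>B^0 is the ambient Banach space (type 'a with its norm); B^1 is a linear
subspace S of it, equipped with its own norm n1 under which it is complete.\<close>

definition is_norm_on :: "'a::real_vector set \<Rightarrow> ('a \<Rightarrow> real) \<Rightarrow> bool" where
  "is_norm_on S n \<longleftrightarrow>
     (\<forall>x\<in>S. 0 \<le> n x) \<and>
     (\<forall>x\<in>S. n x = 0 \<longleftrightarrow> x = 0) \<and>
     (\<forall>x\<in>S. \<forall>c::real. n (c *\<^sub>R x) = \<bar>c\<bar> * n x) \<and>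
     (\<forall>x\<in>S. \<forall>y\<in>S. n (x + y) \<le> n x + n y)"

definition banach_subspace :: "'a::real_vector set \<Rightarrow> ('a \<Rightarrow> real) \<Rightarrow> bool" where
  "banach_subspace S n \<longleftrightarrow>
     subspace S \<and> is_norm_on S n \<and>
     (\<forall>x::nat \<Rightarrow> 'a. (\<forall>k. x k \<in> S) \<longrightarrow>
        (\<forall>e>0. \<exists>N. \<forall>p\<ge>N. \<forall>q\<ge>N. n (x p - x q) < e) \<longrightarrow>
        (\<exists>l\<in>S. (\<lambda>k. n (x k - l)) \<longlonglongrightarrow> 0))"

definition linear_on :: "'a::real_vector set \<Rightarrow> ('a \<Rightarrow> 'b::real_vector) \<Rightarrow> bool" where
  "linear_on S L \<longleftrightarrow>
     (\<forall>x\<in>S. \<forall>y\<in>S. L (x + y) = L x + L y) \<and>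
     (\<forall>x\<in>S. \<forall>c::real. L (c *\<^sub>R x) = c *\<^sub>R L x)"

definition weak_bounded :: "'a::real_normed_vector set \<Rightarrow> ('a \<Rightarrow> real) \<Rightarrow> ('a \<Rightarrow> 'a) \<Rightarrow> bool" where
  "weak_bounded S n1 L \<longleftrightarrow>
     (\<forall>\<epsilon>>0. \<exists>c>0. \<forall>f\<in>S. norm (L f) \<le> c * norm f + \<epsilon> * n1 f)"

end

theory Submission
  imports Defs
begin

lemma basics:
  fixes S :: "'a::real_normed_vector set" and n1 :: "'a \<Rightarrow> real" and L :: "'a \<Rightarrow> 'a"
  assumes B: "banach_subspace S n1" and Lin: "linear_on S L"
  shows "0 \<in> S" "\<And>x y. x \<in> S \<Longrightarrow> y \<in> S \<Longrightarrow> x - y \<in> S"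
    "\<And>x c. x \<in> S \<Longrightarrow> c *\<^sub>R x \<in> S"
    "\<And>x. x \<in> S \<Longrightarrow> 0 \<le> n1 x" "n1 0 = 0"
    "\<And>x. x \<in> S \<Longrightarrow> x \<noteq> 0 \<Longrightarrow> 0 < n1 x"
    "\<And>x c. x \<in> S \<Longrightarrow> n1 (c *\<^sub>R x) = \<bar>c\<bar> * n1 x"
    "\<And>x y. x \<in> S \<Longrightarrow> y \<in> S \<Longrightarrow> n1 (x - y) \<le> n1 x + n1 y"
    "L 0 = 0"
    "\<And>x c. x \<in> S \<Longrightarrow> L (c *\<^sub>R x) = c *\<^sub>R L x"
    "\<And>x y. x \<in> S \<Longrightarrow> y \<in> S \<Longrightarrow> L (x - y) = L x - L y"
proof -
  have sub: "subspace S" and nS: "is_norm_on S n1" using B unfolding banach_subspace_def by auto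
  have N1: "\<forall>x\<in>S. 0 \<le> n1 x" and N2: "\<forall>x\<in>S. n1 x = 0 \<longleftrightarrow> x = 0"
    and N3: "\<forall>x\<in>S. \<forall>c::real. n1 (c *\<^sub>R x) = \<bar>c\<bar> * n1 x"
    and N4: "\<forall>x\<in>S. \<forall>y\<in>S. n1 (x + y) \<le> n1 x + n1 y"
    using nS unfolding is_norm_on_def by (fast, fast, fast, fast)
  show z: "0 \<in> S" using sub by (simp add: subspace_0)
  show d: "\<And>x y. x \<in> S \<Longrightarrow> y \<in> S \<Longrightarrow> x - y \<in> S" using sub by (simp add: subspace_diff)
  show sc: "\<And>x c. x \<in> S \<Longrightarrow> c *\<^sub>R x \<in> S" using sub by (simp add: subspace_scale)
  show "\<And>x. x \<in> S \<Longrightarrow> 0 \<le> n1 x" using N1 by (rule bspec)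
  show "n1 0 = 0" using N2 z by (rule_tac iffD2[OF bspec[OF N2 z]]) (rule refl)
  show "\<And>x. x \<in> S \<Longrightarrow> x \<noteq> 0 \<Longrightarrow> 0 < n1 x"
  proof -
    fix x assume "x \<in> S" "x \<noteq> 0"
    then have "0 \<le> n1 x" "n1 x \<noteq> 0" using bspec[OF N1] bspec[OF N2] by auto
    then show "0 < n1 x" by linarith
  qed
  show hom: "\<And>x c. x \<in> S \<Longrightarrow> n1 (c *\<^sub>R x) = \<bar>c\<bar> * n1 x" using N3 by blast
  show "\<And>x y. x \<in> S \<Longrightarrow> y \<in> S \<Longrightarrow> n1 (x - y) \<le> n1 x + n1 y"
  proof -
    fix x y assume x: "x \<in> S" and y: "y \<in> S"
    have "n1 (x + (-1) *\<^sub>R y) \<le> n1 x + n1 ((-1) *\<^sub>R y)"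
      using N4 x sc[OF y] by blast
    then show "n1 (x - y) \<le> n1 x + n1 y" using hom[OF y, of "-1"] by simp
  qed
  show Lsc: "\<And>x c. x \<in> S \<Longrightarrow> L (c *\<^sub>R x) = c *\<^sub>R L x" using Lin unfolding linear_on_def by blast
  show "L 0 = 0" using Lsc[OF z, of 0] by simp
  show "\<And>x y. x \<in> S \<Longrightarrow> y \<in> S \<Longrightarrow> L (x - y) = L x - L y"
  proof -
    fix x y assume x: "x \<in> S" and y: "y \<in> S"
    have "L (x + (-1) *\<^sub>R y) = L x + L ((-1) *\<^sub>R y)"
      using Lin x sc[OF y] unfolding linear_on_def by blast
    then show "L (x - y) = L x - L y" using Lsc[OF y, of "-1"] by simp
  qed
qed


lemma ev_pos: "\<forall>\<^sub>F x in at_right (0::real). 0 < x"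
  by (simp add: eventually_at_filter)

lemma a_b:
  fixes S :: "'a::real_normed_vector set" and n1 :: "'a \<Rightarrow> real" and L :: "'a \<Rightarrow> 'a"
  assumes B: "banach_subspace S n1" and Lin: "linear_on S L"
    and W: "weak_bounded S n1 L" and f: "f \<in> S" and fe: "\<forall>\<epsilon>>0. fe \<epsilon> \<in> S"
    and lim: "((\<lambda>\<epsilon>. norm (fe \<epsilon> - f)) \<longlongrightarrow> 0) (at_right 0)"
    and C: "\<forall>\<epsilon>>0. n1 (fe \<epsilon>) \<le> C"
  shows "((\<lambda>\<epsilon>. norm (L (fe \<epsilon>) - L f)) \<longlongrightarrow> 0) (at_right (0::real))"
proof (rule tendstoI)
  fix e :: real assume e: "0 < e"
  note bs = basics[OF B Lin]
  have "(1::real) > 0" by simp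
  then have f1: "fe 1 \<in> S" "n1 (fe 1) \<le> C" using fe C by blast+
  have C0: "0 \<le> C" using bs(4)[OF f1(1)] f1(2) by linarith
  define K where "K = C + n1 f + 1"
  have K: "0 < K" using C0 bs(4)[OF f] unfolding K_def by linarith
  have eK: "e/(2*K) > 0" using e K by simp
  obtain c where c: "c > 0" "\<forall>g\<in>S. norm (L g) \<le> c * norm g + (e/(2*K)) * n1 g"
    using W[unfolded weak_bounded_def, rule_format, OF eK] by blast
  have ec: "e/(2*c) > 0" using e c(1) by simp
  have ev1: "\<forall>\<^sub>F x in at_right 0. dist (norm (fe x - f)) 0 < e / (2*c)"
    using tendstoD[OF lim ec] .
  show "\<forall>\<^sub>F x in at_right 0. dist (norm (L (fe x) - L f)) 0 < e"
    using ev1 ev_pos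
  proof eventually_elim
    case (elim x)
    have fx: "fe x \<in> S" using fe elim(2) by blast
    have nx: "n1 (fe x) \<le> C" using C elim(2) by blast
    have d: "fe x - f \<in> S" using bs(2)[OF fx f] .
    have eq: "norm (L (fe x) - L f) = norm (L (fe x - f))" using bs(11)[OF fx f] by simp
    have i1: "norm (L (fe x - f)) \<le> c * norm (fe x - f) + (e/(2*K)) * n1 (fe x - f)"
      using c(2) d by blast
    have nn: "norm (fe x - f) < e / (2*c)" using elim(1) by simp
    have i2: "c * norm (fe x - f) < e/2"
    proof -
      have "c * norm (fe x - f) < c * (e / (2*c))" using nn c(1) by (rule mult_strict_left_mono)
      then show ?thesis using c(1) by simp
    qed
    have kk: "n1 (fe x - f) \<le> K" using bs(8)[OF fx f] nx unfolding K_def by linarith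
    have i3: "(e/(2*K)) * n1 (fe x - f) \<le> (e/(2*K)) * K"
      using kk eK by (intro mult_left_mono) auto
    have i4: "(e/(2*K)) * K = e/2" using K by simp
    have "norm (L (fe x) - L f) < e" using eq i1 i2 i3 i4 by linarith
    then show ?case by simp
  qed
qed

lemma b_a:
  fixes S :: "'a::real_normed_vector set" and n1 :: "'a \<Rightarrow> real" and L :: "'a \<Rightarrow> 'a"
  assumes B: "banach_subspace S n1" and Lin: "linear_on S L"
    and H: "\<forall>(fe::real \<Rightarrow> 'a) f. f \<in> S \<longrightarrow> (\<forall>\<epsilon>>0. fe \<epsilon> \<in> S) \<longrightarrow>
                   ((\<lambda>\<epsilon>. norm (fe \<epsilon> - f)) \<longlongrightarrow> 0) (at_right 0) \<longrightarrow>
                   (\<exists>C. \<forall>\<epsilon>>0. n1 (fe \<epsilon>) \<le> C) \<longrightarrow>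
                   ((\<lambda>\<epsilon>. norm (L (fe \<epsilon>) - L f)) \<longlongrightarrow> 0) (at_right 0)"
  shows "weak_bounded S n1 L"
proof (rule ccontr)
  note bs = basics[OF B Lin]
  assume "\<not> weak_bounded S n1 L"
  then obtain e where e: "e > 0" and ne: "\<forall>c>0. \<exists>f\<in>S. \<not> norm (L f) \<le> c * norm f + e * n1 f"
    unfolding weak_bounded_def by blast
  have "\<forall>n::nat. \<exists>f\<in>S. norm (L f) > (real n + 1) * norm f + e * n1 f"
  proof
    fix n :: nat
    have "real n + 1 > 0" by simp
    then obtain f where "f \<in> S" "\<not> norm (L f) \<le> (real n + 1) * norm f + e * n1 f" using ne by blast
    then show "\<exists>f\<in>S. norm (L f) > (real n + 1) * norm f + e * n1 f" by (auto simp: not_le)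
  qed
  then obtain F where F: "\<And>n. F n \<in> S" "\<And>n. norm (L (F n)) > (real n + 1) * norm (F n) + e * n1 (F n)"
    by metis
  define h where "h n = (1 / norm (L (F n))) *\<^sub>R F n" for n
  have pos: "norm (L (F n)) > 0" for n
  proof -
    have "0 \<le> (real n + 1) * norm (F n) + e * n1 (F n)" using bs(4)[OF F(1)] e by simp
    then show ?thesis using F(2)[of n] by linarith
  qed
  have hS: "h n \<in> S" for n unfolding h_def using bs(3) F(1) by blast
  have Lh: "norm (L (h n)) = 1" for n unfolding h_def using bs(10)[OF F(1)] pos[of n] by simp
  have nh: "norm (h n) < 1 / (real n + 1)" for n
  proof -
    have "(real n + 1) * norm (F n) < norm (L (F n))" using F(2)[of n] bs(4)[OF F(1)] e
      by (smt (verit) mult_nonneg_nonneg)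
    then show ?thesis unfolding h_def using pos[of n] by (simp add: field_simps)
  qed
  have n1h: "n1 (h n) \<le> 1 / e" for n
  proof -
    have "e * n1 (F n) < norm (L (F n))" using F(2)[of n]
      by (smt (verit) mult_nonneg_nonneg norm_ge_zero of_nat_0_le_iff)
    then have "n1 (F n) / norm (L (F n)) \<le> 1 / e" using pos[of n] e by (simp add: field_simps)
    then show ?thesis unfolding h_def using bs(7)[OF F(1)] pos[of n] by simp
  qed
  define fe where "fe x = h (nat \<lfloor>1 / x\<rfloor>)" for x :: real
  have feS: "\<forall>\<epsilon>>0. fe \<epsilon> \<in> S" unfolding fe_def using hS by blast
  have small: "norm (fe x) \<le> x" if x: "x > 0" for x
  proof -
    have "1 / x < real (nat \<lfloor>1 / x\<rfloor>) + 1" using x by linarith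
    then have "1 / (real (nat \<lfloor>1 / x\<rfloor>) + 1) < x" using x
      by (smt (verit, ccfv_SIG) divide_less_eq frac_less2 nonzero_mult_div_cancel_left of_nat_0_le_iff zero_less_divide_1_iff)
    then show ?thesis unfolding fe_def using nh by (smt (verit))
  qed
  have lim: "((\<lambda>\<epsilon>. norm (fe \<epsilon> - 0)) \<longlongrightarrow> 0) (at_right (0::real))"
  proof (rule tendsto_sandwich[where f="\<lambda>_. 0" and h="\<lambda>x. x"])
    show "\<forall>\<^sub>F x in at_right 0. 0 \<le> norm (fe x - 0)" by simp
    show "\<forall>\<^sub>F x in at_right 0. norm (fe x - 0) \<le> x" using ev_pos
      by eventually_elim (simp add: small)
    show "((\<lambda>x. x) \<longlongrightarrow> (0::real)) (at_right 0)"
      by (simp add: tendsto_ident_at)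
  qed simp
  have "\<exists>C. \<forall>\<epsilon>>0. n1 (fe \<epsilon>) \<le> C" unfolding fe_def using n1h by blast
  then have "((\<lambda>\<epsilon>. norm (L (fe \<epsilon>) - L 0)) \<longlongrightarrow> 0) (at_right (0::real))"
    using H bs(1) feS lim by blast
  moreover have "norm (L (fe \<epsilon>) - L 0) = 1" for \<epsilon> unfolding fe_def using Lh bs(9) by simp
  ultimately have "((\<lambda>\<epsilon>::real. 1::real) \<longlongrightarrow> 0) (at_right (0::real))" by simp
  then show False using tendsto_const_iff[OF trivial_limit_at_right_real[of "0::real"], of "1::real" 0] by simp
qed


lemma a_c:
  fixes S :: "'a::real_normed_vector set" and n1 :: "'a \<Rightarrow> real" and L :: "'a \<Rightarrow> 'a"
  assumes B: "banach_subspace S n1" and Lin: "linear_on S L"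
    and W: "weak_bounded S n1 L"
  shows "((\<lambda>\<delta>. SUP f\<in>{f\<in>S. n1 f \<le> 1 \<and> norm f \<le> \<delta>}. ereal (norm (L f)))
                   \<longlongrightarrow> 0) (at_right 0)"
proof (rule order_tendstoI)
  note bs = basics[OF B Lin]
  fix a :: ereal assume a: "a < 0"
  show "\<forall>\<^sub>F x in at_right 0. a < (SUP f\<in>{f\<in>S. n1 f \<le> 1 \<and> norm f \<le> x}. ereal (norm (L f)))"
    using ev_pos
  proof eventually_elim
    case (elim x)
    have "0 \<in> {f\<in>S. n1 f \<le> 1 \<and> norm f \<le> x}" using bs(1) bs(5) elim by simp
    then have "ereal (norm (L 0)) \<le> (SUP f\<in>{f\<in>S. n1 f \<le> 1 \<and> norm f \<le> x}. ereal (norm (L f)))"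
      by (rule SUP_upper)
    then have "0 \<le> (SUP f\<in>{f\<in>S. n1 f \<le> 1 \<and> norm f \<le> x}. ereal (norm (L f)))"
      using bs(9) by (simp add: zero_ereal_def)
    then show ?case using a by (rule less_le_trans[rotated])
  qed
next
  note bs = basics[OF B Lin]
  fix a :: ereal assume a: "0 < a"
  obtain b where b: "0 < b" "b < a" using dense[OF a] by blast
  then have bfin: "b \<noteq> \<infinity>" "b \<noteq> -\<infinity>" by auto
  define e where "e = real_of_ereal b"
  have eb: "ereal e = b" using bfin unfolding e_def by (cases b) auto
  have e: "0 < e" using b(1) unfolding eb[symmetric] by simp
  have e2: "e/2 > 0" using e by simp
  obtain c where c: "c > 0" "\<forall>g\<in>S. norm (L g) \<le> c * norm g + (e/2) * n1 g"
    using W[unfolded weak_bounded_def, rule_format, OF e2] by blast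
  have ev: "\<forall>\<^sub>F x in at_right (0::real). x < e / (2*c)"
    unfolding eventually_at_right_field using c e by (intro exI[of _ "e/(2*c)"]) auto
  show "\<forall>\<^sub>F x in at_right 0. (SUP f\<in>{f\<in>S. n1 f \<le> 1 \<and> norm f \<le> x}. ereal (norm (L f))) < a"
    using ev ev_pos
  proof eventually_elim
    case (elim x)
    have "(SUP f\<in>{f\<in>S. n1 f \<le> 1 \<and> norm f \<le> x}. ereal (norm (L f))) \<le> ereal (c * x + e/2)"
    proof (rule SUP_least)
      fix f assume f: "f \<in> {f\<in>S. n1 f \<le> 1 \<and> norm f \<le> x}"
      have "norm (L f) \<le> c * norm f + (e/2) * n1 f" using c(2) f by blast
      also have "\<dots> \<le> c * x + (e/2) * 1"
        using f c(1) e by (intro add_mono mult_left_mono) auto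
      finally show "ereal (norm (L f)) \<le> ereal (c * x + e/2)" by simp
    qed
    moreover have "c * x + e/2 < e" using elim(1) c(1) by (simp add: field_simps)
    then have "ereal (c * x + e/2) < b" using eb by auto
    ultimately show ?case using b(2) by (meson le_less_trans less_trans)
  qed
qed

lemma c_a:
  fixes S :: "'a::real_normed_vector set" and n1 :: "'a \<Rightarrow> real" and L :: "'a \<Rightarrow> 'a"
  assumes B: "banach_subspace S n1" and Lin: "linear_on S L"
    and T: "((\<lambda>\<delta>. SUP f\<in>{f\<in>S. n1 f \<le> 1 \<and> norm f \<le> \<delta>}. ereal (norm (L f)))
                   \<longlongrightarrow> 0) (at_right 0)"
  shows "weak_bounded S n1 L"
  unfolding weak_bounded_def
proof (intro allI impI)
  note bs = basics[OF B Lin]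
  fix e :: real assume e: "0 < e"
  have "\<forall>\<^sub>F x in at_right (0::real). (SUP f\<in>{f\<in>S. n1 f \<le> 1 \<and> norm f \<le> x}. ereal (norm (L f))) < ereal e"
    using order_tendstoD(2)[OF T] e by simp
  then obtain b where b: "b > 0" and bb: "\<And>y. 0 < y \<Longrightarrow> y < b \<Longrightarrow>
      (SUP f\<in>{f\<in>S. n1 f \<le> 1 \<and> norm f \<le> y}. ereal (norm (L f))) < ereal e"
    unfolding eventually_at_right_field by auto
  define d where "d = b / 2"
  have d: "0 < d" "d < b" using b unfolding d_def by auto
  have key: "norm (L g) < e" if g: "g \<in> S" "n1 g \<le> 1" "norm g \<le> d" for g
  proof -
    have "ereal (norm (L g)) \<le> (SUP f\<in>{f\<in>S. n1 f \<le> 1 \<and> norm f \<le> d}. ereal (norm (L f)))"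
      using g by (intro SUP_upper) auto
    also have "\<dots> < ereal e" using bb d by blast
    finally show ?thesis by simp
  qed
  show "\<exists>c>0. \<forall>f\<in>S. norm (L f) \<le> c * norm f + e * n1 f"
  proof (intro exI[of _ "e / d"] conjI ballI)
    show "0 < e / d" using e d by simp
    fix f assume f: "f \<in> S"
    show "norm (L f) \<le> e / d * norm f + e * n1 f"
    proof (cases "f = 0")
      case True then show ?thesis using bs(9) bs(5) by simp
    next
      case False
      have nf: "0 < n1 f" using bs(6)[OF f False] .
      have nrm: "0 < norm f" using False by simp
      show ?thesis
      proof (cases "norm f \<le> d * n1 f")
        case True
        define g where "g = (1 / n1 f) *\<^sub>R f"
        have gS: "g \<in> S" unfolding g_def using bs(3)[OF f] .
        have "n1 g = 1" unfolding g_def using bs(7)[OF f] nf by simp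
        moreover have "norm g \<le> d" unfolding g_def using True nf by (simp add: field_simps)
        ultimately have "norm (L g) < e" using key gS by simp
        moreover have "L g = (1 / n1 f) *\<^sub>R L f" unfolding g_def using bs(10)[OF f] .
        ultimately have "norm (L f) / n1 f < e" using nf by simp
        then have "norm (L f) \<le> e * n1 f" using nf by (simp add: field_simps)
        moreover have "0 \<le> e / d * norm f" using e d by simp
        ultimately show ?thesis by linarith
      next
        case False
        define h where "h = (d / norm f) *\<^sub>R f"
        have hS: "h \<in> S" unfolding h_def using bs(3)[OF f] .
        have "n1 h = d / norm f * n1 f" unfolding h_def using bs(7)[OF f] d nrm by simp
        also have "\<dots> \<le> 1" using False nrm by (simp add: field_simps)
        finally have "n1 h \<le> 1" .
        moreover have "norm h \<le> d" unfolding h_def using d nrm by simp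
        ultimately have "norm (L h) < e" using key hS by simp
        moreover have "L h = (d / norm f) *\<^sub>R L f" unfolding h_def using bs(10)[OF f] .
        ultimately have "d / norm f * norm (L f) < e" using d nrm by simp
        then have "norm (L f) \<le> e / d * norm f" using d nrm by (simp add: field_simps)
        moreover have "0 \<le> e * n1 f" using e nf by simp
        ultimately show ?thesis by linarith
      qed
    qed
  qed
qed

theorem mainTheorem5:
  fixes S :: "'a::banach set" and n1 :: "'a \<Rightarrow> real" and L :: "'a \<Rightarrow> 'a"
  assumes "banach_subspace S n1"
    and "linear_on S L"
  shows "(weak_bounded S n1 L
            \<longleftrightarrow> (\<forall>(fe::real \<Rightarrow> 'a) f. f \<in> S \<longrightarrow> (\<forall>\<epsilon>>0. fe \<epsilon> \<in> S) \<longrightarrow>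
                   ((\<lambda>\<epsilon>. norm (fe \<epsilon> - f)) \<longlongrightarrow> 0) (at_right 0) \<longrightarrow>
                   (\<exists>C. \<forall>\<epsilon>>0. n1 (fe \<epsilon>) \<le> C) \<longrightarrow>
                   ((\<lambda>\<epsilon>. norm (L (fe \<epsilon>) - L f)) \<longlongrightarrow> 0) (at_right 0)))
       \<and> (weak_bounded S n1 L
            \<longleftrightarrow> ((\<lambda>\<delta>. SUP f\<in>{f\<in>S. n1 f \<le> 1 \<and> norm f \<le> \<delta>}. ereal (norm (L f)))
                   \<longlongrightarrow> 0) (at_right 0))"
proof (intro conjI iffI)
  show "weak_bounded S n1 L \<Longrightarrow> ((\<lambda>\<delta>. SUP f\<in>{f\<in>S. n1 f \<le> 1 \<and> norm f \<le> \<delta>}. ereal (norm (L f)))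
                   \<longlongrightarrow> 0) (at_right 0)" by (rule a_c[OF assms])
  show "((\<lambda>\<delta>. SUP f\<in>{f\<in>S. n1 f \<le> 1 \<and> norm f \<le> \<delta>}. ereal (norm (L f)))
                   \<longlongrightarrow> 0) (at_right 0) \<Longrightarrow> weak_bounded S n1 L" by (rule c_a[OF assms])
  show "\<forall>(fe::real \<Rightarrow> 'a) f. f \<in> S \<longrightarrow> (\<forall>\<epsilon>>0. fe \<epsilon> \<in> S) \<longrightarrow>
                   ((\<lambda>\<epsilon>. norm (fe \<epsilon> - f)) \<longlongrightarrow> 0) (at_right 0) \<longrightarrow>
                   (\<exists>C. \<forall>\<epsilon>>0. n1 (fe \<epsilon>) \<le> C) \<longrightarrow>
                   ((\<lambda>\<epsilon>. norm (L (fe \<epsilon>) - L f)) \<longlongrightarrow> 0) (at_right 0) \<Longrightarrow> weak_bounded S n1 L"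
    by (rule b_a[OF assms])
  show "weak_bounded S n1 L \<Longrightarrow> \<forall>(fe::real \<Rightarrow> 'a) f. f \<in> S \<longrightarrow> (\<forall>\<epsilon>>0. fe \<epsilon> \<in> S) \<longrightarrow>
                   ((\<lambda>\<epsilon>. norm (fe \<epsilon> - f)) \<longlongrightarrow> 0) (at_right 0) \<longrightarrow>
                   (\<exists>C. \<forall>\<epsilon>>0. n1 (fe \<epsilon>) \<le> C) \<longrightarrow>
                   ((\<lambda>\<epsilon>. norm (L (fe \<epsilon>) - L f)) \<longlongrightarrow> 0) (at_right 0)"
    by (intro allI impI, elim exE, rule a_b[OF assms]) auto
qed

end
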